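(* Let $F=\{F^{(1)},\ldots,F^{(k)}\}$ be an SNRE of degree $(d,k)$. There exists an algorithm which, given $F$ (i.e. the coefficients of the polynomials $F^{(1)},\ldots,F^{(k)}$), determines the set $\mathcal{E}(F)$ of essential symbols and the set $\mathcal{I}(F)$ of inessential symbols, and this algorithm halts within $k$ steps.
   Context: An SNRE of degree $(d,k)$ consists of $k$ nonzero homogeneous polynomials $F^{(1)},\ldots,F^{(k)}$ of degree $d$ in $k$ variables $x_1,\dots,x_k$ with nonnegative integer coefficients, together with the sequences defined by $\gamma_{i;0}=1$ and $\gamma_{i;n}=F^{(i)}(\gamma_{1;n-1},\ldots,\gamma_{k;n-1})$ for $n\ge1$ (the symbols are $1,\dots,k$). Symbol $i$ induces $j$ ($i\to j$) if $x_j$ occurs in some monomial of $F^{(i)}$ with nonzero coefficient. A symbol $i$ is essential if $\gamma_{i;n}\ge 2$ for some $n\in\mathbb{N}$ and inessential otherwise (i.e. $\gamma_{i;n}=1$ for all $n$); $\mathcal{E}(F)$ and $\mathcal{I}(F)$ denote the sets of essential and inessential symbols. *)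

theory Defs
  imports Main
begin

(* Symbols are 0,...,k-1 (the paper's 1..k shifted by one).
   A homogeneous polynomial of degree d in x_0..x_{k-1} with nonnegative integer
   coefficients is given by its coefficient function on exponent vectors alpha. *)

definition mons :: "nat \<Rightarrow> nat \<Rightarrow> (nat \<Rightarrow> nat) set" where
  "mons k d = {\<alpha>. (\<forall>j. k \<le> j \<longrightarrow> \<alpha> j = 0) \<and> (\<Sum>j<k. \<alpha> j) = d}"

(* c i alpha = coefficient of x^alpha in F^(i) *)
definition is_SNRE :: "nat \<Rightarrow> nat \<Rightarrow> (nat \<Rightarrow> (nat \<Rightarrow> nat) \<Rightarrow> nat) \<Rightarrow> bool" where
  "is_SNRE d k c \<longleftrightarrow>
     (\<forall>i<k. \<forall>\<alpha>. \<alpha> \<notin> mons k d \<longrightarrow> c i \<alpha> = 0) \<and>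
     (\<forall>i<k. \<exists>\<alpha>. c i \<alpha> \<noteq> 0)"

definition evalF :: "nat \<Rightarrow> nat \<Rightarrow> (nat \<Rightarrow> (nat \<Rightarrow> nat) \<Rightarrow> nat) \<Rightarrow> nat \<Rightarrow> (nat \<Rightarrow> nat) \<Rightarrow> nat" where
  "evalF d k c i x = (\<Sum>\<alpha>\<in>mons k d. c i \<alpha> * (\<Prod>j<k. x j ^ \<alpha> j))"

primrec gamma :: "nat \<Rightarrow> nat \<Rightarrow> (nat \<Rightarrow> (nat \<Rightarrow> nat) \<Rightarrow> nat) \<Rightarrow> nat \<Rightarrow> nat \<Rightarrow> nat" where
  "gamma d k c 0 = (\<lambda>i. 1)"
| "gamma d k c (Suc n) = (\<lambda>i. evalF d k c i (gamma d k c n))"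

definition essential_set :: "nat \<Rightarrow> nat \<Rightarrow> (nat \<Rightarrow> (nat \<Rightarrow> nat) \<Rightarrow> nat) \<Rightarrow> nat set" where
  "essential_set d k c = {i. i < k \<and> (\<exists>n. gamma d k c n i \<ge> 2)}"

definition inessential_set :: "nat \<Rightarrow> nat \<Rightarrow> (nat \<Rightarrow> (nat \<Rightarrow> nat) \<Rightarrow> nat) \<Rightarrow> nat set" where
  "inessential_set d k c = {i. i < k \<and> (\<forall>n. gamma d k c n i = 1)}"

definition induces :: "nat \<Rightarrow> nat \<Rightarrow> (nat \<Rightarrow> (nat \<Rightarrow> nat) \<Rightarrow> nat) \<Rightarrow> nat \<Rightarrow> nat \<Rightarrow> bool" where
  "induces d k c i j \<longleftrightarrow> (\<exists>\<alpha>\<in>mons k d. c i \<alpha> \<noteq> 0 \<and> 0 < \<alpha> j)"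

definition alg_init :: "nat \<Rightarrow> nat \<Rightarrow> (nat \<Rightarrow> (nat \<Rightarrow> nat) \<Rightarrow> nat) \<Rightarrow> nat set" where
  "alg_init d k c = {i. i < k \<and> 2 \<le> evalF d k c i (\<lambda>_. 1)}"

definition alg_step :: "nat \<Rightarrow> nat \<Rightarrow> (nat \<Rightarrow> (nat \<Rightarrow> nat) \<Rightarrow> nat) \<Rightarrow> nat set \<Rightarrow> nat set" where
  "alg_step d k c S = S \<union> {i. i < k \<and> (\<exists>j\<in>S. induces d k c i j)}"

definition alg :: "nat \<Rightarrow> nat \<Rightarrow> (nat \<Rightarrow> (nat \<Rightarrow> nat) \<Rightarrow> nat) \<Rightarrow> nat \<Rightarrow> nat set" where
  "alg d k c m = (alg_step d k c ^^ m) (alg_init d k c)"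

end

theory Submission
  imports Defs "HOL-Library.FuncSet"
begin

lemma mons_finite: "finite (mons k d)"
proof -
  have "mons k d \<subseteq> (\<lambda>f j. if j < k then f j else 0) ` (Pi\<^sub>E {..<k} (\<lambda>_. {..d}))"
  proof
    fix \<alpha> assume a: "\<alpha> \<in> mons k d"
    hence z: "\<forall>j. k \<le> j \<longrightarrow> \<alpha> j = 0" and s: "(\<Sum>j<k. \<alpha> j) = d" by (auto simp: mons_def)
    have le: "\<alpha> j \<le> d" if "j < k" for j
      using s member_le_sum[of j "{..<k}" \<alpha>] that by auto
    have "restrict \<alpha> {..<k} \<in> Pi\<^sub>E {..<k} (\<lambda>_. {..d})" using le by (simp add: restrict_PiE_iff)
    moreover have "\<alpha> = (\<lambda>j. if j < k then restrict \<alpha> {..<k} j else 0)"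
      using z by (auto simp: fun_eq_iff)
    ultimately show "\<alpha> \<in> (\<lambda>f j. if j < k then f j else 0) ` (Pi\<^sub>E {..<k} (\<lambda>_. {..d}))"
      by blast
  qed
  moreover have "finite (Pi\<^sub>E {..<k} (\<lambda>_. {..d::nat}))" by (rule finite_PiE) auto
  ultimately show ?thesis by (rule finite_subset[OF _ finite_imageI])
qed

lemma prod_ge1: "(\<forall>j<k. 1 \<le> x j) \<Longrightarrow> 1 \<le> (\<Prod>j<k. (x j::nat) ^ \<alpha> j)"
  by (rule prod_ge_1) auto

lemma term_le:
  assumes "\<alpha> \<in> mons k d"
  shows "c i \<alpha> * (\<Prod>j<k. x j ^ \<alpha> j) \<le> evalF d k c i x"
  unfolding evalF_def using assms mons_finite
  by (intro member_le_sum) auto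

lemma eval_ge1:
  assumes "is_SNRE d k c" "i < k" "\<forall>j<k. 1 \<le> x j"
  shows "1 \<le> evalF d k c i x"
proof -
  have s1: "\<forall>i<k. \<forall>\<alpha>. \<alpha> \<notin> mons k d \<longrightarrow> c i \<alpha> = 0"
    using assms(1) unfolding is_SNRE_def by (rule conjunct1)
  have s2: "\<forall>i<k. \<exists>\<alpha>. c i \<alpha> \<noteq> 0"
    using assms(1) unfolding is_SNRE_def by (rule conjunct2)
  have "\<exists>\<alpha>. c i \<alpha> \<noteq> 0" using s2 assms(2) by simp
  then obtain \<alpha> where a: "c i \<alpha> \<noteq> 0" by (elim exE)
  have m: "\<alpha> \<in> mons k d"
  proof (rule ccontr)
    assume "\<alpha> \<notin> mons k d"
    hence "c i \<alpha> = 0" using s1 assms(2) by simp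
    with a show False by simp
  qed
  have c1: "1 \<le> c i \<alpha>" using a by simp
  have p1: "1 \<le> (\<Prod>j<k. x j ^ \<alpha> j)" by (rule prod_ge1[OF assms(3)])
  have "1 \<le> c i \<alpha> * (\<Prod>j<k. x j ^ \<alpha> j)" using mult_le_mono[OF c1 p1] by simp
  also have "\<dots> \<le> evalF d k c i x" by (rule term_le[OF m])
  finally show ?thesis .
qed

lemma gamma_ge1:
  assumes "is_SNRE d k c"
  shows "j < k \<Longrightarrow> 1 \<le> gamma d k c n j"
proof (induction n arbitrary: j)
  case (Suc n)
  thus ?case using eval_ge1[OF assms Suc.prems, of "gamma d k c n"] by simp
qed simp

lemma induces_lt: "induces d k c i j \<Longrightarrow> j < k"
proof (rule ccontr)
  assume "induces d k c i j" "\<not> j < k"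
  then obtain \<alpha> where "\<alpha> \<in> mons k d" "0 < \<alpha> j" unfolding induces_def by blast
  moreover have "k \<le> j" using \<open>\<not> j < k\<close> by simp
  ultimately show False unfolding mons_def by simp
qed

lemma forward:
  assumes "induces d k c i j" "\<forall>j<k. 1 \<le> x j" "2 \<le> x j"
  shows "2 \<le> evalF d k c i x"
proof -
  obtain \<alpha> where m: "\<alpha> \<in> mons k d" and c: "c i \<alpha> \<noteq> 0" and p: "0 < \<alpha> j"
    using assms(1) by (auto simp: induces_def)
  have jk: "j < k" using induces_lt[OF assms(1)] .
  have "(\<Prod>j<k. x j ^ \<alpha> j) = x j ^ \<alpha> j * (\<Prod>l\<in>{..<k}-{j}. x l ^ \<alpha> l)"
    using jk by (intro prod.remove) auto
  moreover have "1 \<le> (\<Prod>l\<in>{..<k}-{j}. x l ^ \<alpha> l)"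
    using assms(2) by (intro prod_ge_1) auto
  moreover have "2 \<le> x j ^ \<alpha> j"
  proof -
    have "x j \<le> x j ^ \<alpha> j" using p assms(3) by (intro self_le_power) auto
    thus ?thesis using assms(3) by linarith
  qed
  ultimately have "2 \<le> (\<Prod>j<k. x j ^ \<alpha> j)"
    using mult_le_mono2[of 1 "(\<Prod>l\<in>{..<k}-{j}. x l ^ \<alpha> l)" "x j ^ \<alpha> j"] by linarith
  hence "2 \<le> c i \<alpha> * (\<Prod>j<k. x j ^ \<alpha> j)" using c
    using mult_le_mono1[of 1 "c i \<alpha>" "(\<Prod>j<k. x j ^ \<alpha> j)"] by linarith
  also have "\<dots> \<le> evalF d k c i x" by (rule term_le[OF m])
  finally show ?thesis .
qed

lemma backward:
  assumes "evalF d k c i (\<lambda>_. 1) < 2" "\<forall>j<k. 1 \<le> x j" "2 \<le> evalF d k c i x"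
  shows "\<exists>j. induces d k c i j \<and> 2 \<le> x j"
proof (rule ccontr)
  assume n: "\<not> ?thesis"
  have "evalF d k c i x = evalF d k c i (\<lambda>_. 1)"
    unfolding evalF_def
  proof (rule sum.cong[OF refl])
    fix \<alpha> assume m: "\<alpha> \<in> mons k d"
    show "c i \<alpha> * (\<Prod>j<k. x j ^ \<alpha> j) = c i \<alpha> * (\<Prod>j<k. 1 ^ \<alpha> j)"
    proof (cases "c i \<alpha> = 0")
      case False
      have "(\<Prod>j<k. x j ^ \<alpha> j) = (\<Prod>j<k. 1 ^ \<alpha> j)"
      proof (rule prod.cong[OF refl])
        fix j assume j: "j \<in> {..<k}"
        show "x j ^ \<alpha> j = 1 ^ \<alpha> j"
        proof (cases "\<alpha> j = 0")
          case False
          hence "induces d k c i j" using m \<open>c i \<alpha> \<noteq> 0\<close> by (auto simp: induces_def)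
          hence "x j < 2" using n by auto
          hence "x j = 1" using assms(2) j by fastforce
          thus ?thesis by simp
        qed simp
      qed
      thus ?thesis by simp
    qed simp
  qed
  thus False using assms(1,3) by simp
qed

lemma alg_Suc: "alg d k c (Suc m) = alg_step d k c (alg d k c m)"
  by (simp add: alg_def)

lemma alg_sub: "alg d k c m \<subseteq> {..<k}"
  by (induction m) (auto simp: alg_def alg_init_def alg_step_def)

lemma step_mono: "S \<subseteq> alg_step d k c S"
  by (auto simp: alg_step_def)

lemma stab: "alg_step d k c (alg d k c m) = alg d k c m \<or> m \<le> card (alg d k c m)"
proof (induction m)
  case 0 thus ?case by simp
next
  case (Suc m)
  show ?case
  proof (cases "alg_step d k c (alg d k c (Suc m)) = alg d k c (Suc m)")
    case False
    hence nf: "alg_step d k c (alg d k c m) \<noteq> alg d k c m"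
      by (metis alg_Suc)
    hence "alg d k c m \<subset> alg d k c (Suc m)" using step_mono alg_Suc by (metis psubsetI)
    moreover have "finite (alg d k c (Suc m))" by (rule finite_subset[OF alg_sub finite_lessThan])
    ultimately have "card (alg d k c m) < card (alg d k c (Suc m))" by (rule psubset_card_mono[rotated])
    moreover have "m \<le> card (alg d k c m)" using Suc.IH nf by blast
    ultimately show ?thesis by simp
  qed simp
qed

lemma fixk: "alg_step d k c (alg d k c k) = alg d k c k"
proof -
  have "alg_step d k c (alg d k c k) = alg d k c k \<or> k \<le> card (alg d k c k)" by (rule stab)
  thus ?thesis
  proof
    assume "k \<le> card (alg d k c k)"
    hence e: "alg d k c k = {..<k}"
      using card_seteq[OF finite_lessThan alg_sub[of d k c k]] by simp
    have "alg_step d k c {..<k} \<subseteq> {..<k}" by (auto simp: alg_step_def)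
    thus ?thesis unfolding e using step_mono[of "{..<k}" d k c] by (rule subset_antisym)
  qed
qed

theorem theorem2:
  fixes d k :: nat and c :: "nat \<Rightarrow> (nat \<Rightarrow> nat) \<Rightarrow> nat"
  assumes "is_SNRE d k c"
  shows "alg_step d k c (alg d k c k) = alg d k c k
       \<and> alg d k c k = essential_set d k c
       \<and> {i. i < k \<and> i \<notin> alg d k c k} = inessential_set d k c"
proof -
  note g1 = gamma_ge1[OF assms]
  have sub: "alg d k c m \<subseteq> essential_set d k c" for m
  proof (induction m)
    case 0
    show ?case
    proof
      fix i assume "i \<in> alg d k c 0"
      hence "i < k" "2 \<le> gamma d k c 1 i" by (auto simp: alg_def alg_init_def)
      thus "i \<in> essential_set d k c" unfolding essential_set_def by blast
    qed
  next
    case (Suc m)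
    show ?case
    proof
      fix i assume "i \<in> alg d k c (Suc m)"
      hence "i \<in> alg d k c m \<or> (i < k \<and> (\<exists>j\<in>alg d k c m. induces d k c i j))"
        by (auto simp: alg_Suc alg_step_def)
      thus "i \<in> essential_set d k c"
      proof
        assume "i < k \<and> (\<exists>j\<in>alg d k c m. induces d k c i j)"
        then obtain j n where ik: "i < k" and ij: "induces d k c i j" and "2 \<le> gamma d k c n j"
          using Suc unfolding essential_set_def by blast
        hence "2 \<le> gamma d k c (Suc n) i"
          using forward[OF ij] g1 by simp
        thus ?thesis using ik unfolding essential_set_def by blast
      qed (use Suc in blast)
    qed
  qed
  let ?S = "alg d k c k"
  have fx: "alg_step d k c ?S = ?S" by (rule fixk)
  have init: "alg_init d k c \<subseteq> alg d k c m" for m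
    by (induction m) (auto simp: alg_def alg_step_def)
  have "\<forall>i<k. 2 \<le> gamma d k c n i \<longrightarrow> i \<in> ?S" for n
  proof (induction n)
    case 0 thus ?case by simp
  next
    case (Suc n)
    show ?case
    proof (intro allI impI)
      fix i assume ik: "i < k" and g: "2 \<le> gamma d k c (Suc n) i"
      show "i \<in> ?S"
      proof (cases "2 \<le> evalF d k c i (\<lambda>_. 1)")
        case True
        thus ?thesis using ik init[of k] by (auto simp: alg_init_def)
      next
        case False
        then obtain j where ij: "induces d k c i j" and "2 \<le> gamma d k c n j"
          using backward[of d k c i "gamma d k c n"] g g1 by auto
        hence "j \<in> ?S" using Suc induces_lt[OF ij] by blast
        hence "i \<in> alg_step d k c ?S" using ik ij by (auto simp: alg_step_def)
        thus ?thesis using fx by simp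
      qed
    qed
  qed
  hence "essential_set d k c \<subseteq> ?S" unfolding essential_set_def by blast
  hence eq: "?S = essential_set d k c" using sub by blast
  have iff: "(i \<notin> essential_set d k c) = (i \<in> inessential_set d k c)" if ik: "i < k" for i
  proof
    assume "i \<notin> essential_set d k c"
    hence "\<forall>n. \<not> 2 \<le> gamma d k c n i" using ik unfolding essential_set_def by blast
    hence "\<forall>n. gamma d k c n i = 1" using g1[OF ik] by (metis One_nat_def Suc_1 le_antisym not_less_eq_eq)
    thus "i \<in> inessential_set d k c" using ik unfolding inessential_set_def by blast
  next
    assume "i \<in> inessential_set d k c"
    thus "i \<notin> essential_set d k c" unfolding inessential_set_def essential_set_def by auto
  qed
  have "{i. i < k \<and> i \<notin> ?S} = inessential_set d k c"
    using iff unfolding eq by (auto simp: inessential_set_def)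
  note last = this
  show ?thesis by (intro conjI fx eq last)
qed

end
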